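(* As formal power series in $t$, $$\sum_{n\ge0}R_{1,n}t^n=\frac{\sum_{j=0}^{r}(-1)^j d_j t^j}{\sum_{j=0}^{r+1}(-1)^j c_j t^j},\qquad d_j=\sum_{i=0}^{j}(-1)^{j-i}c_i\,R_{1,j-i}.$$
   Context: Fix $r\ge1$, $I_r=\{1,\dots,r\}$. Let $R_{1,0},\dots,R_{r,0},R_{1,1},\dots,R_{r,1}$ be algebraically independent indeterminates over $\mathbb Q$ and $(R_{\alpha,n})_{0\le\alpha\le r+1,n\in\mathbb Z}$ the $A_r$ $Q$-system: the unique family of nonzero elements of $\mathbb Q(R_{1,0},\dots,R_{r,1})$ with these initial values, $R_{0,n}=R_{r+1,n}=1$, and $R_{\alpha,n+1}R_{\alpha,n-1}=R_{\alpha,n}^2+R_{\alpha+1,n}R_{\alpha-1,n}$ ($\alpha\in I_r$, $n\in\mathbb Z$). For $k\in\{0,\dots,r+1\}$, $c_k$ is the determinant of the matrix obtained from $(R_{1,n+i+j-r-3})_{1\le i,j\le r+2}$ by deleting row $r+2$ and column $r+2-k$ (independent of $n$; $c_0=c_{r+1}=1$). *)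

theory Defs
  imports "Jordan_Normal_Form.Determinant" "HOL-Computational_Algebra.Formal_Power_Series"
begin

text \<open>Algebraic independence over the rationals of the family (x i) for i in the finite
  index set I, inside a field of characteristic zero: no nontrivial rational polynomial
  relation (written as a finite linear combination of distinct monomials) holds.\<close>
definition alg_indep_rat :: "'b set \<Rightarrow> ('b \<Rightarrow> 'a::field_char_0) \<Rightarrow> bool" where
  "alg_indep_rat I x \<longleftrightarrow>
     (\<forall>(M :: ('b \<Rightarrow> nat) set) (c :: ('b \<Rightarrow> nat) \<Rightarrow> rat).
        finite M \<longrightarrow> (\<forall>m\<in>M. \<forall>i. i \<notin> I \<longrightarrow> m i = 0) \<longrightarrow>
        (\<Sum>m\<in>M. of_rat (c m) * (\<Prod>i\<in>I. x i ^ m i)) = 0 \<longrightarrow>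
        (\<forall>m\<in>M. c m = 0))"

text \<open>Working in an ambient field of
  characteristic zero containing Q(R_{1,0},...,R_{r,1}).\<close>
definition Q_system :: "nat \<Rightarrow> (nat \<Rightarrow> int \<Rightarrow> 'a::field_char_0) \<Rightarrow> bool" where
  "Q_system r R \<longleftrightarrow>
     alg_indep_rat ({1..r} \<times> {0,1::nat}) (\<lambda>(a,e). R a (int e)) \<and>
     (\<forall>n. R 0 n = 1 \<and> R (r+1) n = 1) \<and>
     (\<forall>a n. a \<le> r+1 \<longrightarrow> R a n \<noteq> 0) \<and>
     (\<forall>a n. 1 \<le> a \<and> a \<le> r \<longrightarrow>
        R a (n+1) * R a (n-1) = (R a n)^2 + R (a+1) n * R (a-1) n)"

text \<open>c_k (computed at shift n): determinant of the (r+1)x(r+1) matrix obtained from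
  (R_{1,n+i+j-r-3})_{1\<le>i,j\<le>r+2} by deleting row r+2 and column r+2-k.
  Entries are 0-indexed: new row i' is old row i'+1; new column j' is old column j'+1
  if j'+1 < r+2-k and old column j'+2 otherwise.\<close>
definition cQ :: "nat \<Rightarrow> (nat \<Rightarrow> int \<Rightarrow> 'a::field_char_0) \<Rightarrow> int \<Rightarrow> nat \<Rightarrow> 'a" where
  "cQ r R n k = det (mat (r+1) (r+1) (\<lambda>(i',j').
      let i = i' + 1; j = (if j' + 1 < r + 2 - k then j' + 1 else j' + 2)
      in R 1 (n + int i + int j - int r - 3)))"

definition dQ :: "nat \<Rightarrow> (nat \<Rightarrow> int \<Rightarrow> 'a::field_char_0) \<Rightarrow> int \<Rightarrow> nat \<Rightarrow> 'a" where
  "dQ r R n j = (\<Sum>i=0..j. (-1)^(j-i) * cQ r R n i * R 1 (int (j-i)))"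

end

theory Submission imports Defs "Jordan_Normal_Form.Char_Poly" begin

lemma det_2x2: assumes "B \<in> carrier_mat 2 2"
  shows "det B = B$$(0,0) * B$$(1,1) - B$$(0,1) * B$$(1,0)"
proof -
  have "det B = (\<Sum>j<2. B $$ (0,j) * cofactor B 0 j)"
    by (rule laplace_expansion_row[OF assms], simp)
  also have "\<dots> = B$$(0,0) * cofactor B 0 0 + B$$(0,1) * cofactor B 0 1"
    by (simp add: numeral_2_eq_2)
  also have "cofactor B 0 0 = B$$(1,1)" unfolding cofactor_def using assms
    by (subst det_single[of _]) (auto simp: mat_delete_def insert_index_def)
  also have "cofactor B 0 1 = - B$$(1,0)" unfolding cofactor_def using assms
    by (subst det_single[of _]) (auto simp: mat_delete_def insert_index_def)
  finally show ?thesis by (simp add: algebra_simps)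
qed

lemma DJ_idom:
  fixes A :: "'a::idom mat"
  assumes A: "A \<in> carrier_mat (m+2) (m+2)" and dA: "det A \<noteq> 0"
  shows "det A * det (mat m m (\<lambda>(i,j). A$$(i,j))) =
     det (mat_delete A (m+1) (m+1)) * det (mat_delete A m m)
   - det (mat_delete A (m+1) m) * det (mat_delete A m (m+1))"
proof -
  define n where "n = m+2"
  define C where "C = adj_mat A"
  have C: "C \<in> carrier_mat n n" and AC: "A * C = det A \<cdot>\<^sub>m 1\<^sub>m n"
    using adj_mat[OF A] unfolding C_def n_def by auto
  define E where "E = mat n n (\<lambda>(i,j). if j < m then (if i = j then 1 else 0) else C$$(i,j))"
  have E: "E \<in> carrier_mat n n" unfolding E_def by auto
  define A11 where "A11 = mat m m (\<lambda>(i,j). A$$(i,j))"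
  define A21 where "A21 = mat 2 m (\<lambda>(i,j). A$$(i+m,j))"
  define C12 where "C12 = mat m 2 (\<lambda>(i,j). C$$(i,j+m))"
  define C22 where "C22 = mat 2 2 (\<lambda>(i,j). C$$(i+m,j+m))"
  have AE: "A * E = four_block_mat A11 (0\<^sub>m m 2) A21 (det A \<cdot>\<^sub>m 1\<^sub>m 2)"
  proof (rule eq_matI)
    fix i j assume i: "i < dim_row (four_block_mat A11 (0\<^sub>m m 2) A21 (det A \<cdot>\<^sub>m 1\<^sub>m 2))"
      and j: "j < dim_col (four_block_mat A11 (0\<^sub>m m 2) A21 (det A \<cdot>\<^sub>m 1\<^sub>m 2))"
    hence i: "i < n" and j: "j < n" by (auto simp: A11_def n_def)
    show "(A * E) $$ (i, j) = four_block_mat A11 (0\<^sub>m m 2) A21 (det A \<cdot>\<^sub>m 1\<^sub>m 2) $$ (i, j)"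
    proof (cases "j < m")
      case True
      have "(A * E) $$ (i,j) = (\<Sum>k<n. A$$(i,k) * (if k = j then 1 else 0))"
        using i j A E True unfolding E_def n_def
        by (simp add: scalar_prod_def atLeast0LessThan)
      also have "\<dots> = A$$(i,j)" using j by (simp add: if_distrib cong: if_cong)
      finally show ?thesis using True i j
        by (auto simp: four_block_mat_def A11_def A21_def n_def Let_def)
    next
      case False
      have "(A * E) $$ (i,j) = (A * C) $$ (i,j)"
        using i j A E C False unfolding E_def n_def
        by (simp add: scalar_prod_def)
      also have "\<dots> = (if i = j then det A else 0)" using i j AC by simp
      finally show ?thesis using False i j
        by (auto simp: four_block_mat_def A11_def A21_def n_def Let_def)
    qed
  qed (insert A E, auto simp: A11_def n_def)
  have EB: "E = four_block_mat (1\<^sub>m m) C12 (0\<^sub>m 2 m) C22"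
    by (rule eq_matI) (auto simp: E_def four_block_mat_def C12_def C22_def n_def Let_def)
  have "det (A * E) = det A * det E" using det_mult[OF A[folded n_def] E] .
  also have "det E = det C22"
    unfolding EB by (subst det_four_block_mat_lower_left_zero) (auto simp: C12_def C22_def)
  finally have "det A * det C22 = det (A * E)" by simp
  also have "\<dots> = det A11 * (det A * det A)"
    unfolding AE by (subst det_four_block_mat_upper_right_zero)
      (auto simp: A11_def A21_def power2_eq_square)
  finally have eq: "det C22 = det A11 * det A" using dA by (simp add: algebra_simps)
  have "det C22 = C$$(m,m) * C$$(m+1,m+1) - C$$(m,m+1) * C$$(m+1,m)"
    by (subst det_2x2) (auto simp: C22_def)
  also have "\<dots> = det (mat_delete A (m+1) (m+1)) * det (mat_delete A m m)
   - det (mat_delete A (m+1) m) * det (mat_delete A m (m+1))"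
    using A unfolding C_def adj_mat_def cofactor_def by (simp add: algebra_simps)
  finally show ?thesis using eq unfolding A11_def by (simp add: algebra_simps)
qed

lemma map_mat_delete: "map_mat h (mat_delete A i j) = mat_delete (map_mat h A) i j"
  by (rule eq_matI) (auto simp: mat_delete_def insert_index_def)

lemma ev_hom: "comm_ring_hom (\<lambda>p::'a::comm_ring_1 poly. poly p 0)" by unfold_locales auto

lemma DJ_field:
  fixes A :: "'a::field mat"
  assumes A: "A \<in> carrier_mat (m+2) (m+2)"
  shows "det A * det (mat m m (\<lambda>(i,j). A$$(i,j))) =
     det (mat_delete A (m+1) (m+1)) * det (mat_delete A m m)
   - det (mat_delete A (m+1) m) * det (mat_delete A m (m+1))"
proof -
  define P where "P = char_poly_matrix (-A)"
  have mA: "-A \<in> carrier_mat (m+2) (m+2)" using A by auto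
  have P: "P \<in> carrier_mat (m+2) (m+2)" unfolding P_def using mA by simp
  have "coeff (char_poly (-A)) (m+2) = 1" using degree_monic_char_poly[OF mA] by simp
  hence "char_poly (-A) \<noteq> 0" by auto
  hence dP: "det P \<noteq> 0" unfolding P_def char_poly_def by simp
  have PA: "map_mat (\<lambda>p. poly p 0) P = A"
    by (rule eq_matI) (insert A, auto simp: P_def char_poly_matrix_def)
  have sub: "map_mat (\<lambda>p. poly p 0) (mat m m (\<lambda>(i,j). P$$(i,j))) = mat m m (\<lambda>(i,j). A$$(i,j))"
    by (rule eq_matI) (insert A P, auto simp: PA[symmetric])
  have "poly (det P * det (mat m m (\<lambda>(i,j). P$$(i,j)))) 0 =
     poly (det (mat_delete P (m+1) (m+1)) * det (mat_delete P m m)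
   - det (mat_delete P (m+1) m) * det (mat_delete P m (m+1))) 0"
    using DJ_idom[OF P dP] by simp
  thus ?thesis
    by (simp only: poly_mult poly_diff comm_ring_hom.hom_det[OF ev_hom, symmetric] map_mat_delete PA sub)
qed

lemma det_permute_cols: assumes A: "A \<in> carrier_mat n n"
  and p: "p permutes {0 ..< (n :: nat)}"
  shows "det (mat n n (\<lambda> (i,j). A $$ (i, p j))) = signof p * det A"
proof -
  have "det (mat n n (\<lambda> (i,j). A $$ (i, p j))) = det ((mat n n (\<lambda> (i,j). A $$ (i, p j)))\<^sup>T)"
    by (subst det_transpose) auto
  also have "(mat n n (\<lambda> (i,j). A $$ (i, p j)))\<^sup>T = mat n n (\<lambda> (i,j). A\<^sup>T $$ (p i, j))"
    by (rule eq_matI) (insert A permutes_in_image[OF p], auto)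
  also have "det \<dots> = signof p * det A\<^sup>T" using det_permute_rows[of "A\<^sup>T" n p] A p by auto
  finally show ?thesis using det_transpose[OF A] by simp
qed

lemma signof_sq: "signof p * signof p = (1::'a::comm_ring_1)"
  by (simp add: sign_def)

lemma det_sim_perm: assumes A: "A \<in> carrier_mat n n"
  and p: "p permutes {0 ..< (n :: nat)}"
  shows "det (mat n n (\<lambda> (i,j). A $$ (p i, p j))) = det A"
proof -
  define B where "B = mat n n (\<lambda> (i,j). A $$ (i, p j))"
  have B: "B \<in> carrier_mat n n" unfolding B_def by auto
  have "mat n n (\<lambda> (i,j). A $$ (p i, p j)) = mat n n (\<lambda> (i,j). B $$ (p i, j))"
    by (rule eq_matI) (insert permutes_in_image[OF p], auto simp: B_def)
  hence "det (mat n n (\<lambda> (i,j). A $$ (p i, p j))) = signof p * det B"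
    using det_permute_rows[OF B p] by simp
  also have "det B = signof p * det A" unfolding B_def by (rule det_permute_cols[OF A p])
  finally show ?thesis by (simp add: mult.assoc[symmetric] signof_sq)
qed

lemma tau_permutes:
  assumes "k = m+1 \<or> k = m+2"
  shows "(\<lambda>i::nat. if i < m then i+1 else if i = m then 0 else i) permutes {0..<k}"
proof -
  let ?t = "\<lambda>i::nat. if i < m then i+1 else if i = m then 0 else i"
  have inj: "inj_on ?t {0..<k}" by (auto simp: inj_on_def split: if_splits)
  have sub: "?t ` {0..<k} \<subseteq> {0..<k}" using assms by auto
  have "?t ` {0..<k} = {0..<k}" by (rule endo_inj_surj[OF _ sub inj]) simp
  hence "bij_betw ?t {0..<k} {0..<k}" using inj by (simp add: bij_betw_def)
  thus ?thesis by (rule bij_imp_permutes) (use assms in auto)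
qed

lemma DJ_FL:
  fixes f :: "nat \<Rightarrow> nat \<Rightarrow> 'a::field"
  shows "det (mat (m+2) (m+2) (\<lambda>(i,j). f i j)) * det (mat m m (\<lambda>(i,j). f (i+1) (j+1))) =
    det (mat (m+1) (m+1) (\<lambda>(i,j). f i j)) * det (mat (m+1) (m+1) (\<lambda>(i,j). f (i+1) (j+1)))
  - det (mat (m+1) (m+1) (\<lambda>(i,j). f i (j+1))) * det (mat (m+1) (m+1) (\<lambda>(i,j). f (i+1) j))"
proof -
  define t where "t = (\<lambda>i::nat. if i < m then i+1 else if i = m then 0 else i)"
  have t1: "t permutes {0..<m+1}" and t2: "t permutes {0..<m+2}"
    unfolding t_def by (rule tau_permutes, simp)+
  define A where "A = mat (m+2) (m+2) (\<lambda>(i,j). f (t i) (t j))"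
  have A: "A \<in> carrier_mat (m+2) (m+2)" unfolding A_def by simp
  have tlt: "\<And>i k. i < k \<Longrightarrow> k = m+1 \<or> k = m+2 \<Longrightarrow> t i < k" unfolding t_def by auto
  have e1: "det A = det (mat (m+2) (m+2) (\<lambda>(i,j). f i j))"
  proof -
    define B where "B = mat (m+2) (m+2) (\<lambda>(i,j). f i j)"
    have eq: "A = mat (m+2) (m+2) (\<lambda>(i,j). B $$ (t i, t j))"
      unfolding A_def B_def by (rule eq_matI) (auto simp: tlt)
    show ?thesis unfolding eq B_def[symmetric] by (rule det_sim_perm[OF _ t2]) (simp add: B_def)
  qed
  have e2: "mat m m (\<lambda>(i,j). A$$(i,j)) = mat m m (\<lambda>(i,j). f (i+1) (j+1))"
    unfolding A_def by (rule eq_matI) (auto simp: t_def)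
  have e3: "det (mat_delete A (m+1) (m+1)) = det (mat (m+1) (m+1) (\<lambda>(i,j). f i j))"
  proof -
    define B where "B = mat (m+1) (m+1) (\<lambda>(i,j). f i j)"
    have eq: "mat_delete A (m+1) (m+1) = mat (m+1) (m+1) (\<lambda>(i,j). B $$ (t i, t j))"
      unfolding A_def B_def by (rule eq_matI) (auto simp: tlt mat_delete_def insert_index_def)
    show ?thesis unfolding eq B_def[symmetric] by (rule det_sim_perm[OF _ t1]) (simp add: B_def)
  qed
  have e4: "mat_delete A m m = mat (m+1) (m+1) (\<lambda>(i,j). f (i+1) (j+1))"
    unfolding A_def by (rule eq_matI) (auto simp: t_def mat_delete_def insert_index_def)
  have e5: "det (mat_delete A (m+1) m) = signof t * det (mat (m+1) (m+1) (\<lambda>(i,j). f i (j+1)))"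
  proof -
    define B where "B = mat (m+1) (m+1) (\<lambda>(i,j). f i (j+1))"
    have eq: "mat_delete A (m+1) m = mat (m+1) (m+1) (\<lambda>(i,j). B $$ (t i, j))"
      unfolding A_def B_def by (rule eq_matI) (auto simp: tlt mat_delete_def insert_index_def, auto simp: t_def)
    show ?thesis unfolding eq B_def[symmetric] by (rule det_permute_rows[OF _ t1]) (simp add: B_def)
  qed
  have e6: "det (mat_delete A m (m+1)) = signof t * det (mat (m+1) (m+1) (\<lambda>(i,j). f (i+1) j))"
  proof -
    define B where "B = mat (m+1) (m+1) (\<lambda>(i,j). f (i+1) j)"
    have eq: "mat_delete A m (m+1) = mat (m+1) (m+1) (\<lambda>(i,j). B $$ (i, t j))"
      unfolding A_def B_def by (rule eq_matI) (auto simp: tlt mat_delete_def insert_index_def, auto simp: t_def)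
    show ?thesis unfolding eq B_def[symmetric] by (rule det_permute_cols[OF _ t1]) (simp add: B_def)
  qed
  have "signof t * x * (signof t * y) = x * (y::'a)" for x y
    by (simp add: algebra_simps signof_sq[of t, where 'a='a, simplified mult.assoc[symmetric]]
        flip: mult.assoc)
  thus ?thesis using DJ_field[OF A] unfolding e1 e2 e3 e4 e5 e6 by simp
qed

definition Hk :: "(nat \<Rightarrow> int \<Rightarrow> 'a::field_char_0) \<Rightarrow> nat \<Rightarrow> int \<Rightarrow> 'a" where
  "Hk R a p = det (mat a a (\<lambda>(i,j). R 1 (p + int i + int j)))"

lemma DJH:
  assumes "a \<ge> 1"
  shows "Hk R (a+1) p * Hk R (a-1) (p+2) = Hk R a p * Hk R a (p+2) - (Hk R a (p+1))^2"
proof -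
  obtain m where a: "a = m+1" using assms by (metis le_add_diff_inverse2)
  have "det (mat (m+2) (m+2) (\<lambda>(i,j). R 1 (p + int i + int j))) * det (mat m m (\<lambda>(i,j). R 1 (p + int (i+1) + int (j+1)))) =
    det (mat (m+1) (m+1) (\<lambda>(i,j). R 1 (p + int i + int j))) * det (mat (m+1) (m+1) (\<lambda>(i,j). R 1 (p + int (i+1) + int (j+1))))
  - det (mat (m+1) (m+1) (\<lambda>(i,j). R 1 (p + int i + int (j+1)))) * det (mat (m+1) (m+1) (\<lambda>(i,j). R 1 (p + int (i+1) + int j)))"
    by (rule DJ_FL[where f="\<lambda>i j. R 1 (p + int i + int j)" and m=m])
  moreover have "\<And>k q. mat k k (\<lambda>(i,j). R 1 (p + int (i+1) + int (j+1))) = mat k k (\<lambda>(i,j). R 1 ((p+2) + int i + int j))"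
    by (rule eq_matI) (auto simp: algebra_simps)
  moreover have "\<And>k q. mat k k (\<lambda>(i,j). R 1 (p + int i + int (j+1))) = mat k k (\<lambda>(i,j). R 1 ((p+1) + int i + int j))"
    by (rule eq_matI) (auto simp: algebra_simps)
  moreover have "\<And>k q. mat k k (\<lambda>(i,j). R 1 (p + int (i+1) + int j)) = mat k k (\<lambda>(i,j). R 1 ((p+1) + int i + int j))"
    by (rule eq_matI) (auto simp: algebra_simps)
  ultimately show ?thesis unfolding Hk_def a by (simp add: power2_eq_square)
qed

lemma Hk_R:
  assumes Q: "Q_system r R" and "a \<le> r+1"
  shows "Hk R a p = R a (p + int a - 1)"
  using assms(2)
proof (induction a arbitrary: p rule: less_induct)
  case (less a)
  have R0: "\<And>n. R 0 n = 1" and Rr: "\<And>n. R (r+1) n = 1"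
    and nz: "\<And>a n. a \<le> r+1 \<Longrightarrow> R a n \<noteq> 0"
    and rec: "\<And>a n. 1 \<le> a \<Longrightarrow> a \<le> r \<Longrightarrow> R a (n+1) * R a (n-1) = (R a n)^2 + R (a+1) n * R (a-1) n"
    using Q unfolding Q_system_def by auto
  consider "a = 0" | "a = 1" | b where "a = b+1" "b \<ge> 1" by (metis One_nat_def add.commute le_add1 not0_implies_Suc plus_1_eq_Suc)
  then show ?case
  proof cases
    case 1 thus ?thesis by (simp add: Hk_def R0)
  next
    case 2 thus ?thesis by (simp add: Hk_def det_single)
  next
    case 3
    have b: "b \<le> r" using 3 less.prems by simp
    have IH1: "\<And>q. Hk R b q = R b (q + int b - 1)" using less.IH[of b] 3 less.prems by simp
    have IH2: "\<And>q. Hk R (b-1) q = R (b-1) (q + int (b-1) - 1)" using less.IH[of "b-1"] 3 less.prems by simp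
    have dj: "Hk R (b+1) p * Hk R (b-1) (p+2) = Hk R b p * Hk R b (p+2) - (Hk R b (p+1))^2"
      by (rule DJH) (rule 3(2))
    have ib: "int (b-1) = int b - 1" using 3(2) by simp
    define n where "n = p + int b"
    have "Hk R (b+1) p * R (b-1) n = R (b+1) n * R (b-1) n"
    proof -
      have "Hk R (b+1) p * R (b-1) n = R b (n-1) * R b (n+1) - (R b n)^2"
        using dj unfolding IH1 IH2 ib n_def by (simp add: algebra_simps)
      also have "\<dots> = R (b+1) n * R (b-1) n" using rec[OF 3(2) b, of n] by (simp add: algebra_simps)
      finally show ?thesis .
    qed
    moreover have "R (b-1) n \<noteq> 0" using nz b by simp
    ultimately have "Hk R (b+1) p = R (b+1) n" by simp
    thus ?thesis using 3 by (simp add: n_def)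
  qed
qed

lemma Hk_top:
  assumes Q: "Q_system r R" and r: "r \<ge> 1"
  shows "Hk R (r+2) p = 0"
proof -
  have Rr: "\<And>n. R (r+1) n = 1" and nz: "\<And>a n. a \<le> r+1 \<Longrightarrow> R a n \<noteq> 0"
    using Q unfolding Q_system_def by auto
  have dj: "Hk R (r+1+1) p * Hk R (r+1-1) (p+2) = Hk R (r+1) p * Hk R (r+1) (p+2) - (Hk R (r+1) (p+1))^2"
    by (rule DJH) simp
  have "Hk R r (p+2) \<noteq> 0" using Hk_R[OF Q, of r] nz[of r] by simp
  moreover have "Hk R (r+2) p * Hk R r (p+2) = 0"
    using dj Hk_R[OF Q, of "r+1"] Rr by simp
  ultimately show ?thesis by simp
qed

lemma cQ_0:
  assumes Q: "Q_system r R"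
  shows "cQ r R p 0 = 1"
proof -
  have "cQ r R p 0 = Hk R (r+1) (p - int r - 1)"
    unfolding cQ_def Hk_def by (intro arg_cong[of _ _ det] eq_matI) (auto simp: Let_def algebra_simps)
  also have "\<dots> = 1" using Hk_R[OF Q, of "r+1"] Q unfolding Q_system_def by simp
  finally show ?thesis .
qed

lemma cQ_last:
  assumes Q: "Q_system r R"
  shows "cQ r R p (r+1) = 1"
proof -
  have "cQ r R p (r+1) = Hk R (r+1) (p - int r)"
    unfolding cQ_def Hk_def by (intro arg_cong[of _ _ det] eq_matI) (auto simp: Let_def algebra_simps)
  also have "\<dots> = 1" using Hk_R[OF Q, of "r+1"] Q unfolding Q_system_def by simp
  finally show ?thesis .
qed

lemma neg1_pow_sub: "j \<le> N \<Longrightarrow> (-1::'a::comm_ring_1)^(N+j) = (-1)^(N-j)"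
proof -
  assume "j \<le> N"
  then obtain d where d: "N = j + d" using le_Suc_ex by blast
  have e: "N + j = d + 2*j" "N - j = d" using d by auto
  show ?thesis unfolding e by (simp add: power_add power_mult)
qed

lemma S0:
  assumes Q: "Q_system r R" and r: "r \<ge> 1" and l: "l \<le> r+1"
  shows "(\<Sum>k=0..r+1. (-1)^k * cQ r R p k * R 1 (p + int l - int k)) = 0"
proof -
  define q where "q = p - int r - 1"
  define G where "G = mat (r+2) (r+2) (\<lambda>(i,j). if i = r+1 then R 1 (q + int l + int j) else R 1 (q + int i + int j))"
  have G: "G \<in> carrier_mat (r+2) (r+2)" unfolding G_def by simp
  have del: "det (mat_delete G (r+1) j) = cQ r R p (r+1-j)" if j: "j < r+2" for j
    unfolding cQ_def G_def q_def
    by (intro arg_cong[of _ _ det] eq_matI) (use j in \<open>auto simp: Let_def algebra_simps mat_delete_def insert_index_def\<close>)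
  have "det G = (\<Sum>j<r+2. G $$ (r+1,j) * cofactor G (r+1) j)"
    by (rule laplace_expansion_row[OF G]) simp
  also have "\<dots> = (\<Sum>j<r+2. R 1 (q + int l + int j) * ((-1)^(r+1-j) * cQ r R p (r+1-j)))"
  proof (rule sum.cong)
    fix j assume "j \<in> {..<r+2}"
    hence j: "j < r+2" by simp
    have "cofactor G (r+1) j = (-1)^(r+1-j) * cQ r R p (r+1-j)"
      unfolding cofactor_def del[OF j] by (subst neg1_pow_sub) (use j in auto)
    moreover have "G $$ (r+1,j) = R 1 (q + int l + int j)" using j by (simp add: G_def)
    ultimately show "G $$ (r+1,j) * cofactor G (r+1) j = R 1 (q + int l + int j) * ((-1)^(r+1-j) * cQ r R p (r+1-j))"
      by simp
  qed simp
  also have "\<dots> = (\<Sum>k=0..r+1. (-1)^k * cQ r R p k * R 1 (p + int l - int k))"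
  proof -
    have "(\<Sum>j<r+2. R 1 (q + int l + int j) * ((-1)^(r+1-j) * cQ r R p (r+1-j)))
       = (\<Sum>j\<in>{0..r+1}. R 1 (q + int l + int (r+1-j)) * ((-1)^j * cQ r R p j))"
      by (rule sum.reindex_bij_witness[of _ "\<lambda>j. r+1-j" "\<lambda>j. r+1-j"]) auto
    also have "\<dots> = (\<Sum>k=0..r+1. (-1)^k * cQ r R p k * R 1 (p + int l - int k))"
      by (rule sum.cong) (auto simp: q_def of_nat_diff algebra_simps)
    finally show ?thesis .
  qed
  finally have eq: "det G = (\<Sum>k=0..r+1. (-1)^k * cQ r R p k * R 1 (p + int l - int k))" .
  have "det G = 0"
  proof (cases "l = r+1")
    case True
    have "G = mat (r+2) (r+2) (\<lambda>(i,j). R 1 (q + int i + int j))"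
      unfolding G_def True by (rule eq_matI) auto
    thus ?thesis using Hk_top[OF Q r, of q] unfolding Hk_def by simp
  next
    case False
    hence "l < r+1" using l by simp
    show ?thesis
      by (rule det_identical_rows[OF G, of l "r+1"]) (use \<open>l < r+1\<close> in \<open>auto simp: G_def\<close>)
  qed
  thus ?thesis using eq by simp
qed

definition SS :: "nat \<Rightarrow> (nat \<Rightarrow> int \<Rightarrow> 'a::field_char_0) \<Rightarrow> int \<Rightarrow> int \<Rightarrow> 'a" where
  "SS r R a m = (\<Sum>k=0..r+1. (-1)^k * cQ r R a k * R 1 (m - int k))"

lemma SS_comm:
  "(\<Sum>k=0..r+1. ((-1)^k * cQ r R a k) * SS r R n (M - int k)) =
   (\<Sum>l=0..r+1. ((-1)^l * cQ r R n l) * SS r R a (M - int l))"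
proof -
  have "(\<Sum>k=0..r+1. ((-1)^k * cQ r R a k) * SS r R n (M - int k)) =
     (\<Sum>k=0..r+1. \<Sum>l=0..r+1. ((-1)^k * cQ r R a k) * ((-1)^l * cQ r R n l) * R 1 (M - int k - int l))"
    unfolding SS_def sum_distrib_left by (simp add: mult_ac)
  also have "\<dots> = (\<Sum>l=0..r+1. \<Sum>k=0..r+1. ((-1)^k * cQ r R a k) * ((-1)^l * cQ r R n l) * R 1 (M - int k - int l))"
    by (rule sum.swap)
  also have "\<dots> = (\<Sum>l=0..r+1. ((-1)^l * cQ r R n l) * SS r R a (M - int l))"
    unfolding SS_def sum_distrib_left by (intro sum.cong refl) (simp add: mult_ac diff_diff_eq add.commute)
  finally show ?thesis .
qed

lemma SS_step:
  assumes Q: "Q_system r R" and r: "r \<ge> 1"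
  shows "(\<Sum>k=0..r+1. ((-1)^k * cQ r R a k) * SS r R n (a + int (r+1) - int k)) = 0"
proof -
  have "(\<Sum>k=0..r+1. ((-1)^k * cQ r R a k) * SS r R n (a + int (r+1) - int k)) =
   (\<Sum>l=0..r+1. ((-1)^l * cQ r R n l) * SS r R a (a + int (r+1) - int l))"
    by (rule SS_comm)
  also have "\<dots> = 0"
  proof (rule sum.neutral, rule ballI)
    fix l assume "l \<in> {0..r+1}"
    hence l: "l \<le> r+1" by simp
    have "SS r R a (a + int (r+1) - int l) = 0"
      using S0[OF Q r, of "r+1-l" a] l unfolding SS_def by (simp add: of_nat_diff algebra_simps)
    thus "((-1)^l * cQ r R n l) * SS r R a (a + int (r+1) - int l) = 0" by simp
  qed
  finally show ?thesis .
qed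

lemma SS_zero:
  assumes Q: "Q_system r R" and r: "r \<ge> 1"
  shows "SS r R n m = 0"
proof -
  have base: "\<And>l. l \<le> r+1 \<Longrightarrow> SS r R n (n + int l) = 0"
    using S0[OF Q r] unfolding SS_def by simp
  have fwd: "SS r R n (a + int (r+1)) = 0" if h: "\<And>j. j \<le> r \<Longrightarrow> SS r R n (a + int j) = 0" for a
  proof -
    have "(\<Sum>k=0..r+1. ((-1)^k * cQ r R a k) * SS r R n (a + int (r+1) - int k)) =
       ((-1)^0 * cQ r R a 0) * SS r R n (a + int (r+1) - int 0) +
       (\<Sum>k=1..r+1. ((-1)^k * cQ r R a k) * SS r R n (a + int (r+1) - int k))"
      by (simp add: sum.atLeast_Suc_atMost)
    also have "(\<Sum>k=1..r+1. ((-1)^k * cQ r R a k) * SS r R n (a + int (r+1) - int k)) = 0"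
    proof (rule sum.neutral, rule ballI)
      fix k assume "k \<in> {1..r+1}"
      hence k: "1 \<le> k" "k \<le> r+1" by auto
      have "SS r R n (a + int (r+1) - int k) = 0" using h[of "r+1-k"] k by (simp add: of_nat_diff algebra_simps)
      thus "((-1)^k * cQ r R a k) * SS r R n (a + int (r+1) - int k) = 0" by simp
    qed
    finally show ?thesis using SS_step[OF Q r, of a n] cQ_0[OF Q] by simp
  qed
  have bwd: "SS r R n a = 0" if h: "\<And>j. 1 \<le> j \<Longrightarrow> j \<le> r+1 \<Longrightarrow> SS r R n (a + int j) = 0" for a
  proof -
    have "(\<Sum>k=0..r+1. ((-1)^k * cQ r R a k) * SS r R n (a + int (r+1) - int k)) =
       (\<Sum>k=0..r. ((-1)^k * cQ r R a k) * SS r R n (a + int (r+1) - int k)) +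
       ((-1)^(r+1) * cQ r R a (r+1)) * SS r R n (a + int (r+1) - int (r+1))"
      by simp
    also have "(\<Sum>k=0..r. ((-1)^k * cQ r R a k) * SS r R n (a + int (r+1) - int k)) = 0"
    proof (rule sum.neutral, rule ballI)
      fix k assume "k \<in> {0..r}"
      hence k: "k \<le> r" by auto
      have "SS r R n (a + int (r+1) - int k) = 0" using h[of "r+1-k"] k by (simp add: of_nat_diff algebra_simps)
      thus "((-1)^k * cQ r R a k) * SS r R n (a + int (r+1) - int k) = 0" by simp
    qed
    finally show ?thesis using SS_step[OF Q r, of a n] cQ_last[OF Q] by simp
  qed
  have main: "\<forall>l\<le>r+1. SS r R n (n + int t + int l) = 0 \<and> SS r R n (n - int t + int l) = 0" for t
  proof (induction t)
    case 0 thus ?case using base by simp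
  next
    case (Suc t)
    show ?case
    proof (intro allI impI conjI)
      fix l assume l: "l \<le> r+1"
      show "SS r R n (n + int (Suc t) + int l) = 0"
      proof (cases "l \<le> r")
        case True thus ?thesis using Suc.IH[rule_format, of "l+1"] by (simp add: algebra_simps)
      next
        case False
        hence "l = r+1" using l by simp
        moreover have "SS r R n ((n + int t + 1) + int (r+1)) = 0"
          by (rule fwd) (use Suc.IH in \<open>auto simp: algebra_simps\<close>)
        ultimately show ?thesis by (simp add: algebra_simps)
      qed
      show "SS r R n (n - int (Suc t) + int l) = 0"
      proof (cases "l \<ge> 1")
        case True thus ?thesis using Suc.IH[rule_format, of "l-1"] l by (simp add: of_nat_diff algebra_simps)
      next
        case False
        hence "l = 0" by simp
        moreover have "SS r R n (n - int t - 1) = 0"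
        proof (rule bwd)
          fix j assume "1 \<le> j" "j \<le> r+1"
          thus "SS r R n (n - int t - 1 + int j) = 0"
            using Suc.IH[rule_format, of "j-1"] by (simp add: of_nat_diff algebra_simps)
        qed
        ultimately show ?thesis by (simp add: algebra_simps)
      qed
    qed
  qed
  show ?thesis
  proof (cases "m \<ge> n")
    case True
    hence "m = n + int (nat (m - n)) + int 0" by simp
    thus ?thesis using main[of "nat (m-n)"] by (metis le0)
  next
    case False
    hence "m = n - int (nat (n - m)) + int 0" by simp
    thus ?thesis using main[of "nat (n-m)"] by (metis le0)
  qed
qed

lemma fps_poly_nth:
  "fps_nth (\<Sum>j=0..K. fps_const (a j) * fps_X ^ j) k = (if k \<le> K then a k else (0::'a::comm_ring_1))"
  by (simp add: fps_sum_nth if_distrib cong: if_cong)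

theorem mainTheorem7:
  fixes r :: nat and R :: "nat \<Rightarrow> int \<Rightarrow> 'a::field_char_0" and n :: int
  assumes "r \<ge> 1" and "Q_system r R"
  shows "Abs_fps (\<lambda>m. R 1 (int m)) =
    (\<Sum>j=0..r. fps_const ((-1)^j * dQ r R n j) * fps_X ^ j) /
    (\<Sum>j=0..r+1. fps_const ((-1)^j * cQ r R n j) * fps_X ^ j)"
proof -
  note r = assms(1) and Q = assms(2)
  define F where "F = Abs_fps (\<lambda>m. R 1 (int m))"
  define N where "N = (\<Sum>j=0..r. fps_const ((-1)^j * dQ r R n j) * fps_X ^ j)"
  define D where "D = (\<Sum>j=0..r+1. fps_const ((-1)^j * cQ r R n j) * fps_X ^ j)"
  have Dn: "\<And>i. fps_nth D i = (if i \<le> r+1 then (-1)^i * cQ r R n i else 0)"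
    unfolding D_def by (rule fps_poly_nth)
  have Nn: "\<And>i. fps_nth N i = (if i \<le> r then (-1)^i * dQ r R n i else 0)"
    unfolding N_def by (rule fps_poly_nth)
  have D0: "fps_nth D 0 \<noteq> 0" unfolding Dn using cQ_0[OF Q] by simp
  have FD: "D * F = N"
  proof (rule fps_ext)
    fix m
    have "fps_nth (D * F) m = (\<Sum>i=0..m. fps_nth D i * R 1 (int m - int i))"
      unfolding fps_mult_nth F_def by (intro sum.cong refl) (simp add: of_nat_diff)
    also have "\<dots> = fps_nth N m"
    proof (cases "m \<le> r")
      case True
      have "(\<Sum>i=0..m. fps_nth D i * R 1 (int m - int i)) = (\<Sum>i=0..m. (-1)^i * cQ r R n i * R 1 (int m - int i))"
        by (intro sum.cong refl) (use True in \<open>auto simp: Dn\<close>)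
      also have "\<dots> = (-1)^m * dQ r R n m"
        unfolding dQ_def sum_distrib_left
      proof (intro sum.cong refl)
        fix i assume "i \<in> {0..m}"
        hence i: "i \<le> m" by simp
        have "(-1::'a)^m * (-1)^(m-i) = (-1)^m * (-1)^(m+i)" using neg1_pow_sub[OF i, where 'a='a] by simp
        also have "\<dots> = (-1)^i" by (simp add: power_add flip: mult.assoc)
        finally have s: "(-1::'a)^m * (-1)^(m-i) = (-1)^i" .
        show "(-1)^i * cQ r R n i * R 1 (int m - int i) = (-1)^m * ((-1)^(m-i) * cQ r R n i * R 1 (int (m-i)))"
          using i s by (simp add: of_nat_diff mult.assoc[symmetric])
      qed
      also have "\<dots> = fps_nth N m" unfolding Nn using True by simp
      finally show ?thesis .
    next
      case False
      have "(\<Sum>i=0..m. fps_nth D i * R 1 (int m - int i)) = (\<Sum>i=0..r+1. fps_nth D i * R 1 (int m - int i))"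
        by (rule sum.mono_neutral_right) (use False in \<open>auto simp: Dn\<close>)
      also have "\<dots> = SS r R n (int m)"
        unfolding SS_def by (intro sum.cong refl) (simp add: Dn)
      also have "\<dots> = 0" by (rule SS_zero[OF Q r])
      also have "0 = fps_nth N m" unfolding Nn using False by simp
      finally show ?thesis .
    qed
    finally show "fps_nth (D * F) m = fps_nth N m" .
  qed
  have "N / D = N * inverse D" by (rule fps_divide_unit[OF D0])
  also have "\<dots> = F * (D * inverse D)" unfolding FD[symmetric] by (simp add: mult_ac)
  also have "D * inverse D = 1" by (rule inverse_mult_eq_1'[OF D0])
  finally show ?thesis unfolding F_def N_def D_def by simp
qed

end
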